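(* Let $\Lambda=(\lambda_{ij})$ be the transition intensity matrix of an ergodic continuous-time Markov chain on $\mathbb{S}=\{a_1,\dots,a_d\}$ (distinct points). Let $N_s$ be a $d\times d$ matrix-valued process whose off-diagonal entries $N^{ij}_s$, $i\ne j$, are independent Poisson processes with intensities $\lambda_{ij}$, and whose diagonal entries are $N^{ii}_s=-\sum_{j\ne i}N^{ij}_s$. Let $\eta_0$ and $\tilde\eta_0$ be random vectors with values in the standard basis $\{e_1,\dots,e_d\}$ of $\mathbb{R}^d$, independent of each other and of $N$, and let $\eta,\tilde\eta$ be the solutions of the Itô equations $$\eta_t=\eta_0+\int_0^t dN_s^*\,\eta_{s-},\qquad \tilde\eta_t=\tilde\eta_0+\int_0^t dN_s^*\,\tilde\eta_{s-}$$ (driven by the same $N$). Set $X_t=\sum_{i=1}^d a_i\eta_t(i)$, $\tilde X_t=\sum_{i=1}^d a_i\tilde\eta_t(i)$ and $\tau=\inf\{t\ge0: X_t=\tilde X_t\}$ (with $\inf\emptyset=\infty$). Then almost surely $\lim_{n\to\infty}\mathbf{1}\{\tau\ge n\}=0$.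
   Context: A continuous-time Markov chain with intensity matrix $\Lambda$ is ergodic if the limits $\mu_i=\lim_{t\to\infty}\mathsf{P}(X_t=a_i)$ exist, are strictly positive and are independent of the initial distribution. Under the construction above, $\eta_t$ stays in the standard basis and $X$, $\tilde X$ are Markov chains with intensity matrix $\Lambda$. *)

theory Defs
  imports "HOL-Probability.Probability"
begin

text \<open>Square matrices of size d are represented as functions nat => nat => real,
  only the entries with indices < d being relevant (indices 0..d-1 stand for 1..d).\<close>

definition mat_mult :: "nat \<Rightarrow> (nat \<Rightarrow> nat \<Rightarrow> real) \<Rightarrow> (nat \<Rightarrow> nat \<Rightarrow> real) \<Rightarrow> nat \<Rightarrow> nat \<Rightarrow> real" where
  "mat_mult d A B i j = (\<Sum>k<d. A i k * B k j)"

fun mat_pow :: "nat \<Rightarrow> (nat \<Rightarrow> nat \<Rightarrow> real) \<Rightarrow> nat \<Rightarrow> nat \<Rightarrow> nat \<Rightarrow> real" where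
  "mat_pow d A 0 = (\<lambda>i j. if i = j then 1 else 0)"
| "mat_pow d A (Suc n) = mat_mult d (mat_pow d A n) A"

definition trans_fun :: "nat \<Rightarrow> (nat \<Rightarrow> nat \<Rightarrow> real) \<Rightarrow> real \<Rightarrow> nat \<Rightarrow> nat \<Rightarrow> real" where
  "trans_fun d L t i j = (\<Sum>n. t ^ n / fact n * mat_pow d L n i j)"

definition intensity_matrix :: "nat \<Rightarrow> (nat \<Rightarrow> nat \<Rightarrow> real) \<Rightarrow> bool" where
  "intensity_matrix d L \<longleftrightarrow>
     (\<forall>i<d. \<forall>j<d. i \<noteq> j \<longrightarrow> 0 \<le> L i j) \<and>
     (\<forall>i<d. L i i = - (\<Sum>j\<in>{..<d} - {i}. L i j))"

definition prob_vector :: "nat \<Rightarrow> (nat \<Rightarrow> real) \<Rightarrow> bool" where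
  "prob_vector d p \<longleftrightarrow> (\<forall>i<d. 0 \<le> p i) \<and> (\<Sum>i<d. p i) = 1"

text \<open>Ergodicity: for every initial distribution p, P(X_t = a_j) = sum_i p_i exp(t Lambda)_ij
  converges to a limit mu_j > 0 that does not depend on p.\<close>
definition ergodic_chain :: "nat \<Rightarrow> (nat \<Rightarrow> nat \<Rightarrow> real) \<Rightarrow> bool" where
  "ergodic_chain d L \<longleftrightarrow>
     (\<exists>mu. (\<forall>j<d. 0 < mu j) \<and>
       (\<forall>p. prob_vector d p \<longrightarrow>
          (\<forall>j<d. ((\<lambda>t. \<Sum>i<d. p i * trans_fun d L t i j) \<longlongrightarrow> mu j) at_top)))"

definition poisson_process :: "'a measure \<Rightarrow> real \<Rightarrow> ('a \<Rightarrow> real \<Rightarrow> nat) \<Rightarrow> bool" where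
  "poisson_process M r N \<longleftrightarrow>
     (\<forall>t. (\<lambda>\<omega>. N \<omega> t) \<in> measurable M (count_space UNIV)) \<and>
     (AE \<omega> in M. N \<omega> 0 = 0 \<and> mono_on {0..} (N \<omega>) \<and>
        (\<forall>t\<ge>0. ((\<lambda>u. real (N \<omega> u)) \<longlongrightarrow> real (N \<omega> t)) (at_right t))) \<and>
     (\<forall>s t k. 0 \<le> s \<longrightarrow> s \<le> t \<longrightarrow>
        measure M {\<omega> \<in> space M. N \<omega> t - N \<omega> s = k}
          = (r * (t - s)) ^ k / fact k * exp (- (r * (t - s)))) \<and>
     (\<forall>n (ts :: nat \<Rightarrow> real). 0 \<le> ts 0 \<longrightarrow> (\<forall>i<n. ts i \<le> ts (Suc i)) \<longrightarrow>
        prob_space.indep_vars M (\<lambda>_. count_space UNIV)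
          (\<lambda>i \<omega>. N \<omega> (ts (Suc i)) - N \<omega> (ts i)) {..<n})"

definition stieltjes_int :: "(real \<Rightarrow> nat) \<Rightarrow> (real \<Rightarrow> real) \<Rightarrow> real \<Rightarrow> real" where
  "stieltjes_int F f t =
     (LINT s:{0<..t}|interval_measure (\<lambda>u. real (F (max u 0))). f s)"

definition left_lim :: "(real \<Rightarrow> real) \<Rightarrow> real \<Rightarrow> real" where
  "left_lim g s = Lim (at_left s) g"

definition std_basis :: "nat \<Rightarrow> (nat \<Rightarrow> real) set" where
  "std_basis d = {(\<lambda>i. if i = k then 1 else 0) | k. k < d}"

text \<open>eta is a (pathwise, cadlag) solution of eta_t = eta_0 + int_0^t dN_s^* eta_{s-},
  where N^{kk} = - sum_{j ~= k} N^{kj}; componentwise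
  (N^* eta)(k) = sum_{l ~= k} N^{lk} eta(l) + N^{kk} eta(k).\<close>
definition sde_solution ::
  "nat \<Rightarrow> (nat \<Rightarrow> nat \<Rightarrow> real \<Rightarrow> nat) \<Rightarrow> (nat \<Rightarrow> real) \<Rightarrow> (real \<Rightarrow> nat \<Rightarrow> real) \<Rightarrow> bool" where
  "sde_solution d N e0 e \<longleftrightarrow>
     (\<forall>k<d. \<forall>t\<ge>0. ((\<lambda>u. e u k) \<longlongrightarrow> e t k) (at_right t)) \<and>
     (\<forall>k<d. \<forall>t>0. \<exists>l. ((\<lambda>u. e u k) \<longlongrightarrow> l) (at_left t)) \<and>
     (\<forall>k<d. \<forall>t\<ge>0. e t k = e0 k
        + (\<Sum>l\<in>{..<d} - {k}. stieltjes_int (N l k) (left_lim (\<lambda>u. e u l)) t)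
        - (\<Sum>j\<in>{..<d} - {k}. stieltjes_int (N k j) (left_lim (\<lambda>u. e u k)) t))"

end

theory Submission
  imports Defs
begin

definition mv :: "nat \<times> nat \<Rightarrow> (nat \<Rightarrow> real) \<Rightarrow> nat \<Rightarrow> real" where
  "mv ij v = (\<lambda>k. if k = fst ij then 0 else if k = snd ij then v (snd ij) + v (fst ij) else v k)"

definition sm :: "nat \<times> nat \<Rightarrow> nat \<Rightarrow> nat" where
  "sm ij x = (if x = fst ij then snd ij else x)"

definition wmv :: "(nat \<times> nat) list \<Rightarrow> (nat \<Rightarrow> real) \<Rightarrow> nat \<Rightarrow> real" where
  "wmv w v = foldl (\<lambda>u ij. mv ij u) v w"

definition wsm :: "(nat \<times> nat) list \<Rightarrow> nat \<Rightarrow> nat" where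
  "wsm w x = foldl (\<lambda>y ij. sm ij y) x w"

lemma wmv_snoc: "wmv (xs @ [x]) v = mv x (wmv xs v)"
  by (simp add: wmv_def)
lemma wsm_snoc: "wsm (xs @ [x]) v = sm x (wsm xs v)"
  by (simp add: wsm_def)

lemma wsm_range: "set w \<subseteq> {(i,j). i < d \<and> j < d} \<Longrightarrow> l < d \<Longrightarrow> wsm w l < d"
proof (induction w rule: rev_induct)
  case Nil then show ?case by (simp add: wsm_def)
next
  case (snoc x xs) then show ?case by (auto simp: wsm_snoc sm_def)
qed

lemma wmv_formula:
  assumes "set w \<subseteq> {(i,j). i < d \<and> j < d \<and> i \<noteq> j}"
  shows "\<forall>k<d. wmv w v k = (\<Sum>l\<in>{l. l < d \<and> wsm w l = k}. v l)"
  using assms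
proof (induction w rule: rev_induct)
  case Nil
  have "{l. l < d \<and> l = k} = {k}" if "k < d" for k using that by auto
  then show ?case by (simp add: wmv_def wsm_def)
next
  case (snoc x xs)
  obtain i j where x: "x = (i,j)" by (cases x)
  with snoc.prems have ij: "i < d" "j < d" "i \<noteq> j" by auto
  from snoc have IH: "\<forall>k<d. wmv xs v k = (\<Sum>l\<in>{l. l < d \<and> wsm xs l = k}. v l)" by auto
  show ?case
  proof (intro allI impI)
    fix k assume k: "k < d"
    let ?S = "\<lambda>k. {l. l < d \<and> wsm xs l = k}"
    have fin: "finite (?S k)" for k by auto
    show "wmv (xs @ [x]) v k = (\<Sum>l\<in>{l. l < d \<and> wsm (xs @ [x]) l = k}. v l)"
    proof (cases "k = i")
      case True
      have eq: "{l. l < d \<and> wsm (xs @ [x]) l = k} = {}" using ij True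
        by (auto simp: wsm_snoc sm_def x)
      show ?thesis unfolding eq using True by (simp add: wmv_snoc mv_def x)
    next
      case ki: False
      show ?thesis
      proof (cases "k = j")
        case True
        have eq: "{l. l < d \<and> wsm (xs @ [x]) l = k} = ?S j \<union> ?S i" using True ij
          by (auto simp: wsm_snoc sm_def x)
        have "(\<Sum>l\<in>?S j \<union> ?S i. v l) = (\<Sum>l\<in>?S j. v l) + (\<Sum>l\<in>?S i. v l)"
          by (rule sum.union_disjoint) (use ij in auto)
        then show ?thesis using True ki IH ij eq by (simp add: wmv_snoc mv_def x)
      next
        case False
        have eq: "{l. l < d \<and> wsm (xs @ [x]) l = k} = ?S k" using False ki
          by (auto simp: wsm_snoc sm_def x)
        then show ?thesis using False ki IH k by (simp add: wmv_snoc mv_def x)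
      qed
    qed
  qed
qed

lemma wmv_collapse:
  assumes "set w \<subseteq> {(i,j). i < d \<and> j < d \<and> i \<noteq> j}" "\<forall>l<d. wsm w l = 0" "k < d"
  shows "wmv w v k = (if k = 0 then (\<Sum>l<d. v l) else 0)"
proof -
  have "{l. l < d \<and> wsm w l = k} = (if k = 0 then {..<d} else {})" using assms(2) by auto
  then show ?thesis using wmv_formula[OF assms(1)] assms(3) by auto
qed

lemma wsm_append: "wsm (xs @ ys) x = wsm ys (wsm xs x)"
  by (simp add: wsm_def)

lemma word_exists:
  assumes R: "R \<subseteq> {(i,j). i < d \<and> j < d \<and> i \<noteq> j}"
    and reach: "\<forall>i<d. (i, 0) \<in> R\<^sup>*" and d: "0 < d"
  shows "\<exists>w. set w \<subseteq> R \<and> (\<forall>l<d. wsm w l = 0)"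
proof -
  define dist where "dist i = (LEAST n. (i, 0) \<in> R ^^ n)" for i
  have dist0: "(i, 0) \<in> R ^^ dist i" if "i < d" for i
  proof -
    from reach that obtain n where "(i,0) \<in> R ^^ n" by (auto simp: rtrancl_power)
    then show ?thesis unfolding dist_def by (rule LeastI)
  qed
  have d00: "dist 0 = 0" unfolding dist_def by (rule Least_eq_0) simp
  have nxt_ex: "\<exists>j. (i, j) \<in> R \<and> dist j < dist i" if "i < d" "i \<noteq> 0" for i
  proof -
    have "dist i \<noteq> 0" using dist0[OF that(1)] that(2) by (metis relpow_0_E)
    then obtain m where m: "dist i = Suc m" by (cases "dist i") auto
    from dist0[OF that(1)] m obtain y where y: "(i,y) \<in> R" "(y,0) \<in> R ^^ m"
      using relpow_Suc_D2 by metis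
    have "dist y \<le> m" unfolding dist_def by (rule Least_le) (rule y(2))
    with y m show ?thesis by auto
  qed
  define nxt where "nxt i = (SOME j. (i, j) \<in> R \<and> dist j < dist i)" for i
  have nxt: "(i, nxt i) \<in> R \<and> dist (nxt i) < dist i" if "i < d" "i \<noteq> 0" for i
    unfolding nxt_def by (rule someI_ex) (rule nxt_ex[OF that])
  define rnd where "rnd = map (\<lambda>i. (i, nxt i)) [1..<d]"
  have rndR: "set rnd \<subseteq> R" using nxt by (auto simp: rnd_def)
  have gen: "\<And>x. x < d \<Longrightarrow> set ls \<subseteq> {1..<d} \<Longrightarrow>
      wsm (map (\<lambda>i. (i, nxt i)) ls) x < d \<and>
      ((wsm (map (\<lambda>i. (i, nxt i)) ls) x = x \<and> x \<notin> set ls) \<or> dist (wsm (map (\<lambda>i. (i, nxt i)) ls) x) < dist x)"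
    for ls
  proof (induction ls)
    case Nil then show ?case by (simp add: wsm_def)
  next
    case (Cons a ls)
    have a: "a < d" "a \<noteq> 0" using Cons.prems by auto
    have nr: "nxt a < d" using nxt[OF a] R by auto
    show ?case
    proof (cases "x = a")
      case True
      have s: "sm (a, nxt a) x = nxt a" using True by (simp add: sm_def)
      from Cons.IH[OF nr] Cons.prems have "wsm (map (\<lambda>i. (i, nxt i)) ls) (nxt a) < d \<and>
          (wsm (map (\<lambda>i. (i, nxt i)) ls) (nxt a) = nxt a \<or> dist (wsm (map (\<lambda>i. (i, nxt i)) ls) (nxt a)) < dist (nxt a))"
        by auto
      then show ?thesis using nxt[OF a] True s by (auto simp: wsm_def)
    next
      case False
      have s: "sm (a, nxt a) x = x" using False by (simp add: sm_def)
      from Cons.IH[OF Cons.prems(1)] Cons.prems False s show ?thesis by (auto simp: wsm_def)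
    qed
  qed
  have rnd_step: "wsm rnd x < d \<and> (x = 0 \<and> wsm rnd x = 0 \<or> x \<noteq> 0 \<and> dist (wsm rnd x) < dist x)" if "x < d" for x
  proof -
    have "set [1..<d] \<subseteq> {1..<d}" by auto
    from gen[OF that this] show ?thesis using that d00 unfolding rnd_def by auto
  qed
  have rnd0: "wsm rnd 0 = 0"
  proof -
    have "set [1..<d] \<subseteq> {1..<d}" by auto
    from gen[OF d this] show ?thesis using d00 unfolding rnd_def by auto
  qed
  have iter: "x < d \<Longrightarrow> wsm (concat (replicate n rnd)) x < d \<and>
      (wsm (concat (replicate n rnd)) x = 0 \<or> dist (wsm (concat (replicate n rnd)) x) + n \<le> dist x)" for n x
  proof (induction n)
    case 0 then show ?case by (simp add: wsm_def)
  next
    case (Suc n)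
    let ?y = "wsm (concat (replicate n rnd)) x"
    have eq: "concat (replicate (Suc n) rnd) = concat (replicate n rnd) @ rnd"
      by (simp add: replicate_append_same[symmetric])
    have "wsm (concat (replicate (Suc n) rnd)) x = wsm rnd ?y"
      unfolding eq wsm_append by (rule refl)
    moreover from Suc have y: "?y < d" "?y = 0 \<or> dist ?y + n \<le> dist x" by auto
    ultimately show ?case
    proof (cases "?y = 0")
      case True
      then show ?thesis using \<open>wsm (concat (replicate (Suc n) rnd)) x = wsm rnd ?y\<close> rnd0 d by simp
    next
      case False
      then have "dist ?y + n \<le> dist x" using y by simp
      moreover have "wsm rnd ?y < d" "dist (wsm rnd ?y) < dist ?y" using rnd_step[OF y(1)] False by auto
      ultimately show ?thesis using \<open>wsm (concat (replicate (Suc n) rnd)) x = wsm rnd ?y\<close> by simp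
    qed
  qed
  define K where "K = Suc (Max (dist ` {..<d}))"
  have dK: "dist x < K" if "x < d" for x
    unfolding K_def using that by (simp add: le_imp_less_Suc)
  have "\<forall>l<d. wsm (concat (replicate K rnd)) l = 0"
  proof (intro allI impI)
    fix l assume l: "l < d"
    from iter[OF l, of K] dK[OF l] show "wsm (concat (replicate K rnd)) l = 0" by auto
  qed
  moreover have "set (concat (replicate K rnd)) \<subseteq> R" using rndR by auto
  ultimately show ?thesis by blast
qed

lemma ergodic_reach:
  assumes erg: "ergodic_chain d L" and im: "intensity_matrix d L" and i: "i < d" and k: "k < d"
  shows "(i, k) \<in> {(i,j). i < d \<and> j < d \<and> i \<noteq> j \<and> 0 < L i j}\<^sup>*"
proof (rule ccontr)
  let ?R = "{(i,j). i < d \<and> j < d \<and> i \<noteq> j \<and> 0 < L i j}"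
  assume nk: "(i, k) \<notin> ?R\<^sup>*"
  define S where "S = {l. l < d \<and> (i, l) \<in> ?R\<^sup>*}"
  have closed: "L a b = 0" if "a \<in> S" "b < d" "b \<notin> S" for a b
  proof (rule ccontr)
    assume "L a b \<noteq> 0"
    moreover have "a \<noteq> b" using that by auto
    moreover have "0 \<le> L a b" using im that \<open>a \<noteq> b\<close> by (auto simp: intensity_matrix_def S_def)
    ultimately have "(a, b) \<in> ?R" using that by (auto simp: S_def)
    moreover from that(1) have "(i, a) \<in> ?R\<^sup>*" by (auto simp: S_def)
    ultimately have "(i, b) \<in> ?R\<^sup>*" by (meson rtrancl_into_rtrancl)
    with that show False by (auto simp: S_def)
  qed
  obtain mu where mu: "\<forall>j<d. 0 < mu j" and lim: "\<forall>p. prob_vector d p \<longrightarrow>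
          (\<forall>j<d. ((\<lambda>t. \<Sum>i<d. p i * trans_fun d L t i j) \<longlongrightarrow> mu j) at_top)"
    using erg unfolding ergodic_chain_def by blast
  have kS: "k \<notin> S" using nk by (auto simp: S_def)
  have iS: "i \<in> S" using i by (auto simp: S_def)
  have pow0: "mat_pow d L n i l = 0" if "l < d" "l \<notin> S" for n l
    using that
  proof (induction n arbitrary: l)
    case 0 then show ?case using iS by auto
  next
    case (Suc n)
    have "mat_pow d L (Suc n) i l = (\<Sum>a<d. mat_pow d L n i a * L a l)"
      by (simp add: mat_mult_def)
    also have "\<dots> = 0"
    proof (rule sum.neutral, intro ballI)
      fix a assume a: "a \<in> {..<d}"
      show "mat_pow d L n i a * L a l = 0"
      proof (cases "a \<in> S")
        case True
        then show ?thesis using closed[OF True Suc.prems] by simp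
      next
        case False then show ?thesis using Suc.IH a by auto
      qed
    qed
    finally show ?case .
  qed
  define p where "p = (\<lambda>l. if l = i then 1 else (0::real))"
  have pv: "prob_vector d p" using i by (simp add: prob_vector_def p_def)
  have z: "(\<Sum>a<d. p a * trans_fun d L t a k) = 0" for t
  proof -
    have "(\<Sum>a<d. p a * trans_fun d L t a k) = trans_fun d L t i k"
    proof -
      have "(\<lambda>a. p a * trans_fun d L t a k) = (\<lambda>a. if a = i then trans_fun d L t a k else 0)"
        by (auto simp: p_def fun_eq_iff)
      then show ?thesis using i by (simp only: sum.delta finite_lessThan) simp
    qed
    also have "\<dots> = 0" unfolding trans_fun_def using pow0[OF k kS] by simp
    finally show ?thesis .
  qed
  from lim pv k have "((\<lambda>t. \<Sum>a<d. p a * trans_fun d L t a k) \<longlongrightarrow> mu k) at_top" by blast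
  then have "((\<lambda>t::real. 0::real) \<longlongrightarrow> mu k) at_top" unfolding z .
  then have "mu k = 0" using tendsto_const tendsto_unique trivial_limit_at_top_linorder by blast
  with mu k show False by auto
qed

lemma ergodic_word:
  assumes erg: "ergodic_chain d L" and im: "intensity_matrix d L" and d: "0 < d"
  shows "\<exists>w. set w \<subseteq> {(i,j). i < d \<and> j < d \<and> i \<noteq> j \<and> 0 < L i j} \<and> (\<forall>l<d. wsm w l = 0)"
  by (rule word_exists[OF _ _ d]) (auto intro: ergodic_reach[OF erg im _ d])

definition pathp :: "(real \<Rightarrow> nat) \<Rightarrow> bool" where
  "pathp F \<longleftrightarrow> mono_on {0..} F \<and> (\<forall>t\<ge>0. ((\<lambda>u. real (F u)) \<longlongrightarrow> real (F t)) (at_right t))"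

definition Fr :: "(real \<Rightarrow> nat) \<Rightarrow> real \<Rightarrow> real" where
  "Fr F = (\<lambda>u. real (F (max u 0)))"

lemma pathp_mono: "pathp F \<Longrightarrow> 0 \<le> x \<Longrightarrow> x \<le> y \<Longrightarrow> F x \<le> F y"
  unfolding pathp_def by (auto simp: mono_on_def)

lemma Fr_mono: "pathp F \<Longrightarrow> x \<le> y \<Longrightarrow> Fr F x \<le> Fr F y"
  unfolding Fr_def by (auto intro!: pathp_mono)

lemma Fr_rc: assumes "pathp F" shows "continuous (at_right a) (Fr F)"
  unfolding continuous_within
proof (cases "a < 0")
  case True
  have "eventually (\<lambda>u. u \<in> {a<..<0}) (at_right a)" by (rule eventually_at_right_real[OF True])
  then have "eventually (\<lambda>u. Fr F u = Fr F a) (at_right a)"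
    by eventually_elim (use True in \<open>auto simp: Fr_def\<close>)
  then show "(Fr F \<longlongrightarrow> Fr F a) (at_right a)"
    by (rule tendsto_eventually)
next
  case False
  then have a: "0 \<le> a" by simp
  have "eventually (\<lambda>u. real (F u) = Fr F u) (at_right a)"
    using eventually_at_right_less[of a] by eventually_elim (use a in \<open>auto simp: Fr_def\<close>)
  moreover have "((\<lambda>u. real (F u)) \<longlongrightarrow> real (F a)) (at_right a)" using assms a by (auto simp: pathp_def)
  ultimately have "(Fr F \<longlongrightarrow> real (F a)) (at_right a)" using tendsto_cong by fastforce
  then show "(Fr F \<longlongrightarrow> Fr F a) (at_right a)" using a by (simp add: Fr_def)
qed

lemma emeasure_Fr:
  assumes "pathp F" "0 \<le> a" "a \<le> b"
  shows "emeasure (interval_measure (Fr F)) {a<..b} = ennreal (real (F b) - real (F a))"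
proof -
  have "emeasure (interval_measure (Fr F)) {a<..b} = ennreal (Fr F b - Fr F a)"
    by (rule emeasure_interval_measure_Ioc[OF assms(3)]) (auto intro: Fr_mono[OF assms(1)] Fr_rc[OF assms(1)])
  then show ?thesis using assms by (simp add: Fr_def)
qed

definition cadlag :: "(real \<Rightarrow> real) \<Rightarrow> bool" where
  "cadlag g \<longleftrightarrow> (\<forall>x\<ge>0. (g \<longlongrightarrow> g x) (at_right x)) \<and> (\<forall>x>0. \<exists>l. (g \<longlongrightarrow> l) (at_left x))"

lemma cadlag_bounded:
  assumes "cadlag g"
  shows "\<exists>B. \<forall>x\<in>{0..T}. \<bar>g x\<bar> \<le> B"
proof -
  have loc: "\<exists>\<delta>>0. \<exists>b. \<forall>y\<in>{0..T}. dist y x < \<delta> \<longrightarrow> \<bar>g y\<bar> \<le> b" if x: "x \<in> {0..T}" for x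
  proof -
    have "eventually (\<lambda>y. dist (g y) (g x) < 1) (at_right x)"
      using assms x by (intro tendstoD) (auto simp: cadlag_def)
    then obtain b1 where b1: "b1 > x" "\<forall>y>x. y < b1 \<longrightarrow> dist (g y) (g x) < 1"
      by (auto simp: eventually_at_right_field)
    obtain l b2 where b2: "b2 < x" "\<forall>y>b2. y < x \<longrightarrow> 0 \<le> y \<longrightarrow> dist (g y) l < 1"
    proof (cases "x > 0")
      case True
      then obtain l where "(g \<longlongrightarrow> l) (at_left x)" using assms by (auto simp: cadlag_def)
      then have "eventually (\<lambda>y. dist (g y) l < 1) (at_left x)" by (intro tendstoD) auto
      then obtain b2 where "b2 < x" "\<forall>y>b2. y < x \<longrightarrow> dist (g y) l < 1"
        by (auto simp: eventually_at_left_field)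
      then show ?thesis using that by blast
    next
      case False
      then have "\<forall>y>x - 1. y < x \<longrightarrow> 0 \<le> y \<longrightarrow> dist (g y) 0 < 1" using x by auto
      then show ?thesis using that[of "x - 1" 0] by auto
    qed
    define \<delta> where "\<delta> = min (b1 - x) (x - b2)"
    have "\<delta> > 0" using b1 b2 by (simp add: \<delta>_def)
    moreover have "\<forall>y\<in>{0..T}. dist y x < \<delta> \<longrightarrow> \<bar>g y\<bar> \<le> \<bar>g x\<bar> + \<bar>l\<bar> + 1"
    proof (intro ballI impI)
      fix y assume y: "y \<in> {0..T}" "dist y x < \<delta>"
      consider "y = x" | "x < y" | "y < x" by linarith
      then show "\<bar>g y\<bar> \<le> \<bar>g x\<bar> + \<bar>l\<bar> + 1"
      proof cases
        case 2
        then have "y < b1" using y by (auto simp: \<delta>_def dist_real_def)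
        then have "dist (g y) (g x) < 1" using b1 2 by auto
        then show ?thesis by (auto simp: dist_real_def)
      next
        case 3
        then have "y > b2" using y by (auto simp: \<delta>_def dist_real_def)
        then have "dist (g y) l < 1" using b2 3 y by auto
        then show ?thesis by (auto simp: dist_real_def)
      qed auto
    qed
    ultimately show ?thesis by blast
  qed
  then obtain \<delta> b where db: "\<And>x. x \<in> {0..T} \<Longrightarrow> \<delta> x > 0 \<and> (\<forall>y\<in>{0..T}. dist y x < \<delta> x \<longrightarrow> \<bar>g y\<bar> \<le> b x)"
    by metis
  have cpt: "compact {0..T}" by simp
  have cov: "{0..T} \<subseteq> (\<Union>c\<in>{0..T}. ball c (\<delta> c))" using db by force
  obtain D where D: "D \<subseteq> {0..T}" "finite D" "{0..T} \<subseteq> (\<Union>c\<in>D. ball c (\<delta> c))"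
    by (rule compactE_image[OF cpt _ cov]) auto
  have "\<bar>g y\<bar> \<le> (\<Sum>c\<in>D. \<bar>b c\<bar>)" if y: "y \<in> {0..T}" for y
  proof -
    from D(3) y obtain c where c: "c \<in> D" "dist c y < \<delta> c" by auto
    then have "\<bar>g y\<bar> \<le> b c" using db[of c] D(1) y by (auto simp: dist_commute)
    also have "\<dots> \<le> \<bar>b c\<bar>" by simp
    also have "\<dots> \<le> (\<Sum>c\<in>D. \<bar>b c\<bar>)" by (rule member_le_sum) (use c D in auto)
    finally show ?thesis .
  qed
  then show ?thesis by blast
qed

definition lft :: "(real \<Rightarrow> real) \<Rightarrow> real \<Rightarrow> real" where
  "lft g = left_lim g"

lemma cadlag_left_lim:
  assumes "cadlag g" "x > 0"
  shows "(g \<longlongrightarrow> left_lim g x) (at_left x)"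
proof -
  obtain l where l: "(g \<longlongrightarrow> l) (at_left x)" using assms by (auto simp: cadlag_def)
  then have "left_lim g x = l" unfolding left_lim_def by (intro tendsto_Lim) auto
  with l show ?thesis by simp
qed

lemma cadlag_left_lim_bounded:
  assumes "cadlag g" "\<forall>x\<in>{0..T}. \<bar>g x\<bar> \<le> B" "x \<in> {0<..T}"
  shows "\<bar>left_lim g x\<bar> \<le> B"
proof -
  have "((\<lambda>y. \<bar>g y\<bar>) \<longlongrightarrow> \<bar>left_lim g x\<bar>) (at_left x)"
    using cadlag_left_lim[OF assms(1)] assms(3) by (intro tendsto_rabs) auto
  moreover have "eventually (\<lambda>y. \<bar>g y\<bar> \<le> B) (at_left x)"
    using eventually_at_left_real[of 0 x] assms(3)
    by (auto elim!: eventually_mono intro: assms(2)[rule_format])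
  ultimately show ?thesis by (intro tendsto_upperbound) auto
qed

lemma rc_measurable:
  fixes h :: "real \<Rightarrow> real"
  assumes rc: "\<And>x. (h \<longlongrightarrow> h x) (at_right x)"
  shows "h \<in> borel_measurable borel"
proof (rule borel_measurable_LIMSEQ_real)
  define u where "u n x = h (real_of_int \<lceil>real (Suc n) * x\<rceil> / real (Suc n))" for n x
  show "\<And>n. (\<lambda>x. h (real_of_int \<lceil>real (Suc n) * x\<rceil> / real (Suc n))) \<in> borel_measurable borel"
  proof -
    fix n
    have c: "(\<lambda>x. \<lceil>real (Suc n) * x\<rceil>) \<in> borel \<rightarrow>\<^sub>M count_space UNIV" by measurable
    show "(\<lambda>x. h (real_of_int \<lceil>real (Suc n) * x\<rceil> / real (Suc n))) \<in> borel_measurable borel"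
      using measurable_compose_countable[where f="\<lambda>k x. h (real_of_int k / real (Suc n))", OF _ c] by simp
  qed
  fix x :: real
  show "(\<lambda>n. h (real_of_int \<lceil>real (Suc n) * x\<rceil> / real (Suc n))) \<longlonglongrightarrow> h x"
  proof (rule LIMSEQ_I)
    fix r :: real assume r: "0 < r"
    have "eventually (\<lambda>y. dist (h y) (h x) < r) (at_right x)" by (rule tendstoD[OF rc r])
    then obtain b where b: "b > x" "\<forall>y>x. y < b \<longrightarrow> dist (h y) (h x) < r"
      by (auto simp: eventually_at_right_field)
    have "b - x > 0" using b by simp
    from reals_Archimedean[OF this] obtain N where N: "inverse (real (Suc N)) < b - x" by blast
    show "\<exists>no. \<forall>n\<ge>no. norm (h (real_of_int \<lceil>real (Suc n) * x\<rceil> / real (Suc n)) - h x) < r"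
    proof (intro exI allI impI)
      fix n assume n: "N \<le> n"
      let ?y = "real_of_int \<lceil>real (Suc n) * x\<rceil> / real (Suc n)"
      have pos: "real (Suc n) > 0" by simp
      have "real (Suc n) * x \<le> real_of_int \<lceil>real (Suc n) * x\<rceil>" by simp
      then have y1: "x \<le> ?y" using pos by (simp add: field_simps)
      have "real_of_int \<lceil>real (Suc n) * x\<rceil> < real (Suc n) * x + 1" by linarith
      then have "?y < (real (Suc n) * x + 1) / real (Suc n)" using pos by (rule divide_strict_right_mono)
      also have "\<dots> = x + inverse (real (Suc n))" using pos by (simp add: field_simps)
      finally have "?y < x + inverse (real (Suc n))" .
      moreover have "inverse (real (Suc n)) \<le> inverse (real (Suc N))"
        using n by (simp add: le_imp_inverse_le)
      ultimately have y2: "?y < b" using N by linarith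
      show "norm (h ?y - h x) < r"
      proof (cases "?y = x")
        case True then show ?thesis using r by simp
      next
        case False
        then have "x < ?y" using y1 by simp
        then show ?thesis using b y2 by (auto simp: dist_norm)
      qed
    qed
  qed
qed

lemma cadlag_ext_rc:
  assumes "cadlag g"
  shows "((\<lambda>x. g (max x 0)) \<longlongrightarrow> g (max a 0)) (at_right a)"
proof (cases "a < 0")
  case True
  have "eventually (\<lambda>u. u \<in> {a<..<0}) (at_right a)" by (rule eventually_at_right_real[OF True])
  then have "eventually (\<lambda>u. g (max u 0) = g (max a 0)) (at_right a)"
    by eventually_elim (use True in auto)
  then show ?thesis by (rule tendsto_eventually)
next
  case False
  then have a: "0 \<le> a" by simp
  have "eventually (\<lambda>u. g u = g (max u 0)) (at_right a)"
    using eventually_at_right_less[of a] by eventually_elim (use a in auto)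
  moreover have "(g \<longlongrightarrow> g a) (at_right a)" using assms a by (auto simp: cadlag_def)
  ultimately have "((\<lambda>x. g (max x 0)) \<longlongrightarrow> g a) (at_right a)" using tendsto_cong by fastforce
  then show ?thesis using a by simp
qed

lemma left_lim_measurable:
  assumes cg: "cadlag g"
  shows "(\<lambda>x. indicator {0<..t} x * left_lim g x) \<in> borel_measurable borel"
proof (rule borel_measurable_LIMSEQ_real)
  have hm: "(\<lambda>x. g (max x 0)) \<in> borel_measurable borel"
    by (rule rc_measurable) (rule cadlag_ext_rc[OF cg])
  show "\<And>n. (\<lambda>x. indicator {0<..t} x * g (max (x - inverse (real (Suc n))) 0)) \<in> borel_measurable borel"
  proof -
    fix n
    have "(\<lambda>x. g (max (x - inverse (real (Suc n))) 0)) \<in> borel_measurable borel"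
      using measurable_compose[OF _ hm, of "\<lambda>x. x - inverse (real (Suc n))" borel] by simp
    then show "(\<lambda>x. indicator {0<..t} x * g (max (x - inverse (real (Suc n))) 0)) \<in> borel_measurable borel"
      by measurable
  qed
  fix x :: real
  show "(\<lambda>n. indicator {0<..t} x * g (max (x - inverse (real (Suc n))) 0)) \<longlonglongrightarrow> indicator {0<..t} x * left_lim g x"
  proof (cases "x \<in> {0<..t}")
    case False then show ?thesis by simp
  next
    case True
    then have x: "x > 0" by simp
    have s: "(\<lambda>n. x - inverse (real (Suc n))) \<longlonglongrightarrow> x"
      using tendsto_diff[OF tendsto_const LIMSEQ_inverse_real_of_nat, of x] by simp
    have "filterlim (\<lambda>n. x - inverse (real (Suc n))) (at_left x) sequentially"
      unfolding filterlim_at using s by (auto simp: eventually_sequentially)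
    from filterlim_compose[OF cadlag_left_lim[OF cg x] this]
    have l: "(\<lambda>n. g (x - inverse (real (Suc n)))) \<longlonglongrightarrow> left_lim g x" .
    have "eventually (\<lambda>n. x - inverse (real (Suc n)) > 0) sequentially"
      using order_tendstoD(1)[OF s x] .
    then have "eventually (\<lambda>n. g (x - inverse (real (Suc n))) = g (max (x - inverse (real (Suc n))) 0)) sequentially"
      by eventually_elim auto
    with l have "(\<lambda>n. g (max (x - inverse (real (Suc n))) 0)) \<longlonglongrightarrow> left_lim g x"
      using tendsto_cong by fastforce
    then show ?thesis using True by simp
  qed
qed

abbreviation mu :: "(real \<Rightarrow> nat) \<Rightarrow> real measure" where
  "mu F \<equiv> interval_measure (\<lambda>u. real (F (max u 0)))"

lemma emeasure_mu:
  assumes "pathp F" "0 \<le> a" "a \<le> b"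
  shows "emeasure (mu F) {a<..b} = ennreal (real (F b) - real (F a))"
  using emeasure_Fr[OF assms] by (simp add: Fr_def)

lemma bm_mu: "borel_measurable (mu F) = borel_measurable borel"
  by (rule measurable_cong_sets) simp_all

lemma si_integrable:
  assumes F: "pathp F" and g: "cadlag g" and t: "0 \<le> t"
  shows "set_integrable (mu F) {0<..t} (left_lim g)"
proof -
  obtain B where B: "\<forall>x\<in>{0..t}. \<bar>g x\<bar> \<le> B" using cadlag_bounded[OF g] by blast
  have fin: "emeasure (mu F) {0<..t} < \<infinity>" using emeasure_mu[OF F order_refl t] by simp
  have int: "integrable (mu F) (\<lambda>x. B * indicator {0<..t} x)"
    using fin by (intro integrable_mult_right integrable_real_indicator) auto
  have meas: "(\<lambda>x. indicator {0<..t} x * left_lim g x) \<in> borel_measurable (mu F)"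
    using left_lim_measurable[OF g, of t] by (simp only: bm_mu)
  show ?thesis unfolding set_integrable_def
  proof (rule Bochner_Integration.integrable_bound[OF int])
    show "(\<lambda>x. indicat_real {0<..t} x *\<^sub>R left_lim g x) \<in> borel_measurable (mu F)" using meas by simp
    show "AE x in mu F. norm (indicat_real {0<..t} x *\<^sub>R left_lim g x) \<le> norm (B * indicator {0<..t} x)"
    proof (rule AE_I2)
      fix x
      show "norm (indicat_real {0<..t} x *\<^sub>R left_lim g x) \<le> norm (B * indicator {0<..t} x)"
      proof (cases "x \<in> {0<..t}")
        case True
        then have "\<bar>left_lim g x\<bar> \<le> B" by (rule cadlag_left_lim_bounded[OF g B])
        then show ?thesis using True by simp
      qed simp
    qed
  qed
qed

lemma si_split:
  assumes F: "pathp F" and g: "cadlag g" and s: "0 \<le> s" "s \<le> t"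
  shows "stieltjes_int F (left_lim g) t = stieltjes_int F (left_lim g) s + (LINT x:{s<..t}|mu F. left_lim g x)"
proof -
  have I: "set_integrable (mu F) {0<..t} (left_lim g)" using si_integrable[OF F g] s by simp
  have eq: "{0<..t} = {0<..s} \<union> {s<..t}" using s by auto
  have "(LINT x:{0<..s} \<union> {s<..t}|mu F. left_lim g x) = (LINT x:{0<..s}|mu F. left_lim g x) + (LINT x:{s<..t}|mu F. left_lim g x)"
  proof (rule set_integral_Un)
    show "set_integrable (mu F) {0<..s} (left_lim g)"
      by (rule set_integrable_subset[OF I]) (use s in auto)
    show "set_integrable (mu F) {s<..t} (left_lim g)"
      by (rule set_integrable_subset[OF I]) (use s in auto)
  qed auto
  then show ?thesis unfolding stieltjes_int_def eq[symmetric] .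
qed

lemma si_zero:
  assumes F: "pathp F" and g: "cadlag g" and s: "0 \<le> s" "s \<le> t" and eq: "F t = F s"
  shows "stieltjes_int F (left_lim g) t = stieltjes_int F (left_lim g) s"
proof -
  have "{s<..t} \<in> null_sets (mu F)" using emeasure_mu[OF F s] eq by (simp add: null_sets_def)
  then have "AE x in mu F. x \<notin> {s<..t}" by (rule AE_not_in)
  then have "AE x in mu F. indicator {s<..t} x *\<^sub>R left_lim g x = 0" by eventually_elim simp
  then have "(LINT x:{s<..t}|mu F. left_lim g x) = 0" unfolding set_lebesgue_integral_def
    by (rule integral_eq_zero_AE)
  then show ?thesis using si_split[OF F g s] by simp
qed


lemma si_one:
  assumes F: "pathp F" and s: "0 \<le> s" "s \<le> t" and eq: "F t = Suc (F s)"
  shows "\<exists>u. s < u \<and> u \<le> t \<and> (\<forall>v. s \<le> v \<longrightarrow> v < u \<longrightarrow> F v = F s) \<and>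
     (\<forall>g. cadlag g \<longrightarrow> stieltjes_int F (left_lim g) t = stieltjes_int F (left_lim g) s + left_lim g u)"
proof -
  define U where "U = {v. s \<le> v \<and> v \<le> t \<and> F s < F v}"
  define u where "u = Inf U"
  have tU: "t \<in> U" using s eq by (auto simp: U_def)
  have bdd: "bdd_below U" by (rule bdd_belowI[of _ s]) (auto simp: U_def)
  have su: "s \<le> u" unfolding u_def by (rule cInf_greatest) (use tU in \<open>auto simp: U_def\<close>)
  have ut: "u \<le> t" unfolding u_def by (rule cInf_lower[OF tU bdd])
  have below: "F v = F s" if "s \<le> v" "v < u" for v
  proof (rule ccontr)
    assume "F v \<noteq> F s"
    moreover have "F s \<le> F v" using pathp_mono[OF F s(1) that(1)] .
    ultimately have "v \<in> U" using that ut by (auto simp: U_def)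
    then have "u \<le> v" unfolding u_def by (rule cInf_lower[OF _ bdd])
    with that show False by simp
  qed
  have Fu: "F u = Suc (F s)"
  proof -
    have le: "F u \<le> F t" using pathp_mono[OF F _ ut] su s by simp
    have ge: "F s \<le> F u" using pathp_mono[OF F s(1) su] .
    have "\<not> F u \<le> F s"
    proof
      assume a: "F u \<le> F s"
      have "((\<lambda>v. real (F v)) \<longlongrightarrow> real (F u)) (at_right u)" using F su s by (auto simp: pathp_def)
      then have "eventually (\<lambda>v. dist (real (F v)) (real (F u)) < 1) (at_right u)" by (rule tendstoD) simp
      then obtain b where b: "b > u" "\<forall>v>u. v < b \<longrightarrow> dist (real (F v)) (real (F u)) < 1"
        by (auto simp: eventually_at_right_field)
      have "Inf U < b" using b u_def by simp
      then obtain v where v: "v \<in> U" "v < b" using cInf_less_iff[of U b] tU bdd by auto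
      have "u \<le> v" unfolding u_def by (rule cInf_lower[OF v(1) bdd])
      moreover have "F s < F v" using v by (auto simp: U_def)
      ultimately have "u < v" using a by (metis leD order_le_less)
      then have "dist (real (F v)) (real (F u)) < 1" using b v by auto
      then have "F v = F u" by (auto simp: dist_real_def)
      then show False using \<open>F s < F v\<close> a by simp
    qed
    then show ?thesis using le eq by simp
  qed
  have su': "s < u" using su Fu by (metis order_le_less n_not_Suc_n)
  have N1: "{u<..t} \<in> null_sets (mu F)" using emeasure_mu[OF F _ ut] su s Fu eq by (simp add: null_sets_def)
  have N2: "{s<..<u} \<in> null_sets (mu F)"
  proof -
    define A where "A n = {s<..max s (u - inverse (real (Suc n)))}" for n
    have "emeasure (mu F) (A n) = 0" for n
    proof -
      have "F (max s (u - inverse (real (Suc n)))) = F s"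
        by (rule below) (auto simp: su')
      then show ?thesis unfolding A_def using emeasure_mu[OF F s(1), of "max s (u - inverse (real (Suc n)))"] by simp
    qed
    moreover have "range A \<subseteq> sets (mu F)" by (auto simp: A_def)
    ultimately have "emeasure (mu F) (\<Union>n. A n) = 0" by (rule emeasure_UN_eq_0)
    moreover have "(\<Union>n. A n) = {s<..<u}"
    proof
      show "(\<Union>n. A n) \<subseteq> {s<..<u}"
      proof
        fix x assume "x \<in> (\<Union>n. A n)"
        then obtain n where x: "s < x" "x \<le> max s (u - inverse (real (Suc n)))" by (auto simp: A_def)
        have ip: "inverse (real (Suc n)) > 0" by simp
        have "x < u"
        proof (cases "s \<le> u - inverse (real (Suc n))")
          case True then show ?thesis using x ip by (auto simp only: max_def if_True split: if_splits)
        next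
          case False then show ?thesis using x su' by (auto simp only: max_def if_False split: if_splits)
        qed
        then show "x \<in> {s<..<u}" using x by simp
      qed
      show "{s<..<u} \<subseteq> (\<Union>n. A n)"
      proof
        fix x assume x: "x \<in> {s<..<u}"
        then have "u - x > 0" by simp
        from reals_Archimedean[OF this] obtain n where "inverse (real (Suc n)) < u - x" by blast
        then have "x \<in> A n" using x by (auto simp: A_def)
        then show "x \<in> (\<Union>n. A n)" by blast
      qed
    qed
    ultimately show ?thesis by (simp add: null_sets_def)
  qed
  have AEu: "AE x in mu F. x \<in> {s<..t} \<longrightarrow> x = u"
    using AE_not_in[OF N1] AE_not_in[OF N2] by eventually_elim auto
  have "stieltjes_int F (left_lim g) t = stieltjes_int F (left_lim g) s + left_lim g u" if g: "cadlag g" for g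
  proof -
    have m1: "(\<lambda>x. indicator {0<..t} x * left_lim g x) \<in> borel_measurable (mu F)"
      using left_lim_measurable[OF g, of t] by (simp only: bm_mu)
    have "(\<lambda>x. indicator {s<..t} x * (indicator {0<..t} x * left_lim g x)) \<in> borel_measurable (mu F)"
      unfolding bm_mu by (rule borel_measurable_times[OF _ left_lim_measurable[OF g, of t]]) simp
    moreover have "(\<lambda>x. indicator {s<..t} x * (indicator {0<..t} x * left_lim g x)) = (\<lambda>x. indicator {s<..t} x * left_lim g x)"
      using s by (auto simp: fun_eq_iff indicator_def)
    ultimately have m2: "(\<lambda>x. indicator {s<..t} x * left_lim g x) \<in> borel_measurable (mu F)" by simp
    have "(LINT x:{s<..t}|mu F. left_lim g x) = integral\<^sup>L (mu F) (\<lambda>x. left_lim g u * indicator {s<..t} x)"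
      unfolding set_lebesgue_integral_def
    proof (rule integral_cong_AE)
      show "(\<lambda>x. indicat_real {s<..t} x *\<^sub>R left_lim g x) \<in> borel_measurable (mu F)" using m2 by simp
      show "(\<lambda>x. left_lim g u * indicat_real {s<..t} x) \<in> borel_measurable (mu F)"
        unfolding bm_mu by (intro borel_measurable_times) auto
      show "AE x in mu F. indicat_real {s<..t} x *\<^sub>R left_lim g x = left_lim g u * indicat_real {s<..t} x"
        using AEu by eventually_elim (auto simp: indicator_def)
    qed
    also have "\<dots> = left_lim g u * measure (mu F) {s<..t}" by simp
    also have "measure (mu F) {s<..t} = 1"
      using emeasure_mu[OF F s] eq by (simp add: measure_def)
    finally show ?thesis using si_split[OF F g s] by simp
  qed
  then show ?thesis using su' ut below by blast
qed

lemma sde_cadlag: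
  assumes "sde_solution d F e0 e" "k < d"
  shows "cadlag (\<lambda>u. e u k)"
  using assms unfolding sde_solution_def cadlag_def by blast

lemma sde_eq:
  assumes "sde_solution d F e0 e" "k < d" "0 \<le> t"
  shows "e t k = e0 k
        + (\<Sum>l\<in>{..<d} - {k}. stieltjes_int (F l k) (left_lim (\<lambda>u. e u l)) t)
        - (\<Sum>j\<in>{..<d} - {k}. stieltjes_int (F k j) (left_lim (\<lambda>u. e u k)) t)"
  using assms unfolding sde_solution_def by blast

lemma sde_const:
  assumes sde: "sde_solution d F e0 e"
    and paths: "\<And>a b. a < d \<Longrightarrow> b < d \<Longrightarrow> a \<noteq> b \<Longrightarrow> pathp (F a b)"
    and st: "0 \<le> s" "s \<le> v"
    and same: "\<And>a b. a < d \<Longrightarrow> b < d \<Longrightarrow> a \<noteq> b \<Longrightarrow> F a b v = F a b s"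
    and k: "k < d"
  shows "e v k = e s k"
proof -
  have SI: "stieltjes_int (F a b) (left_lim (\<lambda>u. e u l)) v = stieltjes_int (F a b) (left_lim (\<lambda>u. e u l)) s"
    if "a < d" "b < d" "a \<noteq> b" "l < d" for a b l
    by (rule si_zero[OF paths[OF that(1-3)] sde_cadlag[OF sde that(4)] st same[OF that(1-3)]])
  have "(\<Sum>l\<in>{..<d} - {k}. stieltjes_int (F l k) (left_lim (\<lambda>u. e u l)) v) =
        (\<Sum>l\<in>{..<d} - {k}. stieltjes_int (F l k) (left_lim (\<lambda>u. e u l)) s)"
    by (rule sum.cong) (use SI k in auto)
  moreover have "(\<Sum>j\<in>{..<d} - {k}. stieltjes_int (F k j) (left_lim (\<lambda>u. e u k)) v) =
        (\<Sum>j\<in>{..<d} - {k}. stieltjes_int (F k j) (left_lim (\<lambda>u. e u k)) s)"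
    by (rule sum.cong) (use SI k in auto)
  ultimately show ?thesis using sde_eq[OF sde k] st by simp
qed


lemma sde_step:
  assumes sde: "sde_solution d F e0 e"
    and paths: "\<And>a b. a < d \<Longrightarrow> b < d \<Longrightarrow> a \<noteq> b \<Longrightarrow> pathp (F a b)"
    and st: "0 \<le> s" "s \<le> t"
    and ij: "i < d" "j < d" "i \<noteq> j"
    and incr: "\<And>a b. a < d \<Longrightarrow> b < d \<Longrightarrow> a \<noteq> b \<Longrightarrow> F a b t = F a b s + (if (a, b) = (i, j) then 1 else 0)"
  shows "\<forall>k<d. e t k = mv (i, j) (e s) k"
proof -
  have "F i j t = Suc (F i j s)" using incr[OF ij] by simp
  from si_one[OF paths[OF ij] st this] obtain u where u: "s < u" "u \<le> t"
    "\<forall>v. s \<le> v \<longrightarrow> v < u \<longrightarrow> F i j v = F i j s"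
    "\<forall>g. cadlag g \<longrightarrow> stieltjes_int (F i j) (left_lim g) t = stieltjes_int (F i j) (left_lim g) s + left_lim g u"
    by blast
  have cst: "e v k = e s k" if v: "s \<le> v" "v < u" and k: "k < d" for v k
  proof (rule sde_const[OF sde paths st(1) v(1) _ k])
    fix a b assume ab: "a < d" "b < d" "a \<noteq> b"
    show "F a b v = F a b s"
    proof (cases "(a, b) = (i, j)")
      case True
      have "F i j v = F i j s" using u(3) v by blast
      then show ?thesis using True by simp
    next
      case False
      have "F a b s \<le> F a b v" by (rule pathp_mono[OF paths[OF ab] st(1) v(1)])
      moreover have "F a b v \<le> F a b t" by (rule pathp_mono[OF paths[OF ab]]) (use st v u in auto)
      moreover have "F a b t = F a b s" using incr[OF ab] False by simp
      ultimately show ?thesis by linarith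
    qed
  qed
  have ll: "left_lim (\<lambda>w. e w l) u = e s l" if l: "l < d" for l
  proof -
    have "eventually (\<lambda>w. w \<in> {s<..<u}) (at_left u)" by (rule eventually_at_left_real[OF u(1)])
    then have "eventually (\<lambda>w. e w l = e s l) (at_left u)"
      by eventually_elim (rule cst, use l in auto)
    then have "((\<lambda>w. e w l) \<longlongrightarrow> e s l) (at_left u)" by (rule tendsto_eventually)
    then show ?thesis unfolding left_lim_def by (intro tendsto_Lim) auto
  qed
  define D where "D a b = stieltjes_int (F a b) (left_lim (\<lambda>w. e w a)) t - stieltjes_int (F a b) (left_lim (\<lambda>w. e w a)) s" for a b
  have Dv: "D a b = (if (a, b) = (i, j) then e s i else 0)" if ab: "a < d" "b < d" "a \<noteq> b" for a b
  proof (cases "(a, b) = (i, j)")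
    case True
    have "stieltjes_int (F i j) (left_lim (\<lambda>w. e w i)) t = stieltjes_int (F i j) (left_lim (\<lambda>w. e w i)) s + left_lim (\<lambda>w. e w i) u"
      using u(4) sde_cadlag[OF sde ij(1)] by blast
    then show ?thesis using True ll[OF ij(1)] by (simp add: D_def)
  next
    case False
    have "F a b t = F a b s" using incr[OF ab] False by simp
    then have "D a b = 0" using si_zero[OF paths[OF ab] sde_cadlag[OF sde ab(1)] st] by (simp add: D_def)
    then show ?thesis using False by auto
  qed
  show ?thesis
  proof (intro allI impI)
    fix k assume k: "k < d"
    have s1: "(\<Sum>l\<in>{..<d} - {k}. D l k) = (\<Sum>l\<in>{..<d} - {k}. stieltjes_int (F l k) (left_lim (\<lambda>w. e w l)) t)
       - (\<Sum>l\<in>{..<d} - {k}. stieltjes_int (F l k) (left_lim (\<lambda>w. e w l)) s)"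
      by (simp add: D_def sum_subtractf)
    have s2: "(\<Sum>b\<in>{..<d} - {k}. D k b) = (\<Sum>b\<in>{..<d} - {k}. stieltjes_int (F k b) (left_lim (\<lambda>w. e w k)) t)
       - (\<Sum>b\<in>{..<d} - {k}. stieltjes_int (F k b) (left_lim (\<lambda>w. e w k)) s)"
      by (simp add: D_def sum_subtractf)
    have "e t k - e s k = (\<Sum>l\<in>{..<d} - {k}. D l k) - (\<Sum>b\<in>{..<d} - {k}. D k b)"
      unfolding s1 s2 using sde_eq[OF sde k st(1)] sde_eq[OF sde k order_trans[OF st]] by linarith
    also have "(\<Sum>l\<in>{..<d} - {k}. D l k) = (\<Sum>l\<in>{..<d} - {k}. if l = i \<and> k = j then e s i else 0)"
      by (rule sum.cong) (use k Dv in auto)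
    also have "\<dots> = (if k = j then e s i else 0)"
    proof (cases "k = j")
      case True
      have "(\<Sum>l\<in>{..<d} - {k}. if l = i \<and> k = j then e s i else 0) = (\<Sum>l\<in>{..<d} - {k}. if l = i then e s i else 0)"
        using True by simp
      also have "\<dots> = e s i" using ij True by (subst sum.delta) auto
      finally show ?thesis using True by simp
    qed simp
    also have "(\<Sum>b\<in>{..<d} - {k}. D k b) = (\<Sum>b\<in>{..<d} - {k}. if b = j \<and> k = i then e s i else 0)"
      by (rule sum.cong) (use k Dv in auto)
    also have "\<dots> = (if k = i then e s i else 0)"
    proof (cases "k = i")
      case True
      have "(\<Sum>b\<in>{..<d} - {k}. if b = j \<and> k = i then e s i else 0) = (\<Sum>b\<in>{..<d} - {k}. if b = j then e s i else 0)"
        using True by simp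
      also have "\<dots> = e s i" using ij True by (subst sum.delta) auto
      finally show ?thesis using True by simp
    qed simp
    finally have "e t k - e s k = (if k = j then e s i else 0) - (if k = i then e s i else 0)" .
    then show "e t k = mv (i, j) (e s) k" using ij by (auto simp: mv_def)
  qed
qed

lemma mv_cong:
  assumes "\<forall>k<d. u k = u' k" "fst x < d" "snd x < d" "k < d"
  shows "mv x u k = mv x u' k"
  using assms by (auto simp: mv_def)

lemma sde_window:
  assumes sde: "sde_solution d F e0 e"
    and paths: "\<And>a b. a < d \<Longrightarrow> b < d \<Longrightarrow> a \<noteq> b \<Longrightarrow> pathp (F a b)"
    and w: "set w \<subseteq> {(i,j). i < d \<and> j < d \<and> i \<noteq> j}"
    and steps: "\<And>q a b. q < length w \<Longrightarrow> a < d \<Longrightarrow> b < d \<Longrightarrow> a \<noteq> b \<Longrightarrow>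
       F a b (real (nb + q) + 1) = F a b (real (nb + q)) + (if (a, b) = w ! q then 1 else 0)"
  shows "\<forall>k<d. e (real (nb + length w)) k = wmv w (e (real nb)) k"
  using w steps
proof (induction w rule: rev_induct)
  case Nil then show ?case by (simp add: wmv_def)
next
  case (snoc x xs)
  obtain i j where x: "x = (i, j)" by (cases x)
  have ij: "i < d" "j < d" "i \<noteq> j" using snoc.prems(1) x by auto
  have IH: "\<forall>k<d. e (real (nb + length xs)) k = wmv xs (e (real nb)) k"
  proof (rule snoc.IH)
    show "set xs \<subseteq> {(i, j). i < d \<and> j < d \<and> i \<noteq> j}" using snoc.prems(1) by auto
    fix q a b assume "q < length xs" "a < d" "b < d" "a \<noteq> b"
    then show "F a b (real (nb + q) + 1) = F a b (real (nb + q)) + (if (a, b) = xs ! q then 1 else 0)"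
      using snoc.prems(2)[of q a b] by (auto simp: nth_append)
  qed
  have step: "\<forall>k<d. e (real (nb + length xs) + 1) k = mv (i, j) (e (real (nb + length xs))) k"
  proof (rule sde_step[OF sde paths _ _ ij])
    fix a b assume ab: "a < d" "b < d" "a \<noteq> b"
    show "F a b (real (nb + length xs) + 1) = F a b (real (nb + length xs)) + (if (a, b) = (i, j) then 1 else 0)"
      using snoc.prems(2)[of "length xs" a b] ab x by simp
  qed auto
  show ?case
  proof (intro allI impI)
    fix k assume k: "k < d"
    have "real (nb + length (xs @ [x])) = real (nb + length xs) + 1" by simp
    then have "e (real (nb + length (xs @ [x]))) k = e (real (nb + length xs) + 1) k" by (rule arg_cong)
    also have "\<dots> = mv (i, j) (e (real (nb + length xs))) k" using step k by blast
    also have "\<dots> = mv (i, j) (wmv xs (e (real nb))) k" by (rule mv_cong[OF IH]) (use ij k in auto)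
    finally show "e (real (nb + length (xs @ [x]))) k = wmv (xs @ [x]) (e (real nb)) k"
      by (simp add: wmv_snoc x)
  qed
qed

lemma sde_conservation:
  assumes sde: "sde_solution d F e0 e" and t: "0 \<le> t"
  shows "(\<Sum>k<d. e t k) = (\<Sum>k<d. e0 k)"
proof -
  define G where "G a b = stieltjes_int (F a b) (left_lim (\<lambda>u. e u a)) t" for a b
  have "(\<Sum>k<d. e t k) = (\<Sum>k<d. e0 k + ((\<Sum>l<d. G l k) - G k k) - ((\<Sum>j<d. G k j) - G k k))"
  proof (rule sum.cong[OF refl])
    fix k assume "k \<in> {..<d}"
    then have k: "k < d" by simp
    have "(\<Sum>l<d. G l k) = G k k + (\<Sum>l\<in>{..<d} - {k}. G l k)" using k by (subst sum.remove) auto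
    moreover have "(\<Sum>j<d. G k j) = G k k + (\<Sum>j\<in>{..<d} - {k}. G k j)" using k by (subst sum.remove) auto
    ultimately show "e t k = e0 k + ((\<Sum>l<d. G l k) - G k k) - ((\<Sum>j<d. G k j) - G k k)"
      using sde_eq[OF sde k t] by (simp add: G_def)
  qed
  also have "\<dots> = (\<Sum>k<d. e0 k) + ((\<Sum>k<d. \<Sum>l<d. G l k) - (\<Sum>k<d. \<Sum>j<d. G k j))"
    by (simp add: sum.distrib sum_subtractf)
  also have "(\<Sum>k<d. \<Sum>l<d. G l k) = (\<Sum>k<d. \<Sum>j<d. G k j)" by (rule sum.swap)
  finally show ?thesis by simp
qed

lemma (in prob_space) indep_sets_combine:
  fixes J :: "'i \<Rightarrow> 'j set"
  assumes indep: "indep_sets F I"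
    and G: "\<And>a. a \<in> I \<Longrightarrow> indep_sets (G a) (J a)"
    and sub: "\<And>a b. a \<in> I \<Longrightarrow> b \<in> J a \<Longrightarrow> G a b \<subseteq> F a"
    and closed: "\<And>a (K :: 'j set) A. a \<in> I \<Longrightarrow> finite K \<Longrightarrow> K \<noteq> {} \<Longrightarrow> (\<forall>k\<in>K. A k \<in> F a) \<Longrightarrow> (\<Inter>k\<in>K. A k) \<in> F a"
  shows "indep_sets (\<lambda>x. G (fst x) (snd x)) (Sigma I J)"
proof (rule indep_setsI)
  fix x assume "x \<in> Sigma I J"
  then have a: "fst x \<in> I" "snd x \<in> J (fst x)" by auto
  have "F (fst x) \<subseteq> events" using indep a by (auto simp: indep_sets_def)
  then show "G (fst x) (snd x) \<subseteq> events" using sub[OF a] by blast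
next
  fix A K assume K: "K \<noteq> {}" "K \<subseteq> Sigma I J" "finite K" and A: "\<forall>j\<in>K. A j \<in> G (fst j) (snd j)"
  define Ia where "Ia = fst ` K"
  define Ba where "Ba a = {b. (a, b) \<in> K}" for a
  have KS: "K = Sigma Ia Ba" by (force simp: Ia_def Ba_def)
  have finIa: "finite Ia" using K by (simp add: Ia_def)
  have finBa: "finite (Ba a)" for a
  proof -
    have "Ba a = snd ` (K \<inter> {x. fst x = a})" by (force simp: Ba_def)
    then show ?thesis using K by simp
  qed
  have neBa: "Ba a \<noteq> {}" if "a \<in> Ia" for a using that by (force simp: Ia_def Ba_def)
  have IaI: "Ia \<subseteq> I" using K by (auto simp: Ia_def)
  have BaJ: "Ba a \<subseteq> J a" for a using K by (auto simp: Ba_def)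
  have "(\<Inter>x\<in>K. A x) = (\<Inter>a\<in>Ia. \<Inter>b\<in>Ba a. A (a, b))" unfolding KS by auto
  also have "prob \<dots> = (\<Prod>a\<in>Ia. prob (\<Inter>b\<in>Ba a. A (a, b)))"
  proof (rule indep_setsD[OF indep IaI])
    show "Ia \<noteq> {}" using K by (simp add: Ia_def)
    show "finite Ia" by fact
    show "\<forall>j\<in>Ia. (\<Inter>b\<in>Ba j. A (j, b)) \<in> F j"
    proof
      fix a assume a: "a \<in> Ia"
      show "(\<Inter>b\<in>Ba a. A (a, b)) \<in> F a"
      proof (rule closed[of a "Ba a" "\<lambda>b. A (a, b)"])
        show "a \<in> I" using a IaI by auto
        show "\<forall>k\<in>Ba a. A (a, k) \<in> F a" using A sub K by (force simp: Ba_def)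
      qed (use finBa neBa a in auto)
    qed
  qed
  also have "\<dots> = (\<Prod>a\<in>Ia. \<Prod>b\<in>Ba a. prob (A (a, b)))"
  proof (rule prod.cong[OF refl])
    fix a assume a: "a \<in> Ia"
    show "prob (\<Inter>b\<in>Ba a. A (a, b)) = (\<Prod>b\<in>Ba a. prob (A (a, b)))"
      by (rule indep_setsD[OF G BaJ neBa[OF a] finBa]) (use a IaI A K in \<open>auto simp: Ba_def\<close>)
  qed
  also have "\<dots> = (\<Prod>x\<in>K. prob (A x))"
    unfolding KS by (subst prod.Sigma) (auto simp: finIa finBa)
  finally show "prob (\<Inter>j\<in>K. A j) = (\<Prod>j\<in>K. prob (A j))" .
qed

lemma (in prob_space) poisson_indep_events:
  assumes "poisson_process M r N"
  shows "indep_sets (\<lambda>g. {{\<omega> \<in> space M. N \<omega> (real (Suc g)) - N \<omega> (real g) = c g}}) UNIV"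
proof (subst indep_sets_finite_index_sets, intro allI impI)
  fix J :: "nat set" assume J: "J \<subseteq> UNIV" "J \<noteq> {}" "finite J"
  define n where "n = Suc (Max J)"
  have Jn: "J \<subseteq> {..<n}" using J by (auto simp: n_def le_imp_less_Suc)
  have iv: "indep_vars (\<lambda>_. count_space UNIV) (\<lambda>i \<omega>. N \<omega> (real (Suc i)) - N \<omega> (real i)) {..<n}"
  proof -
    have "\<forall>n (ts :: nat \<Rightarrow> real). 0 \<le> ts 0 \<longrightarrow> (\<forall>i<n. ts i \<le> ts (Suc i)) \<longrightarrow>
        indep_vars (\<lambda>_. count_space UNIV) (\<lambda>i \<omega>. N \<omega> (ts (Suc i)) - N \<omega> (ts i)) {..<n}"
      using assms unfolding poisson_process_def by blast
    then have "0 \<le> real 0 \<longrightarrow> (\<forall>i<n. real i \<le> real (Suc i)) \<longrightarrow>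
        indep_vars (\<lambda>_. count_space UNIV) (\<lambda>i \<omega>. N \<omega> (real (Suc i)) - N \<omega> (real i)) {..<n}"
      by (rule allE[of _ n], elim allE[of _ "\<lambda>i. real i"])
    then show ?thesis by simp
  qed
  then have "indep_sets (\<lambda>i. {(\<lambda>\<omega>. N \<omega> (real (Suc i)) - N \<omega> (real i)) -` A \<inter> space M | A. A \<in> sets (count_space UNIV)}) {..<n}"
    unfolding indep_vars_def2 by blast
  then have "indep_sets (\<lambda>g. {{\<omega> \<in> space M. N \<omega> (real (Suc g)) - N \<omega> (real g) = c g}}) {..<n}"
    by (rule indep_sets_mono_sets) (auto intro!: exI[of _ "{c _}"])
  then show "indep_sets (\<lambda>g. {{\<omega> \<in> space M. N \<omega> (real (Suc g)) - N \<omega> (real g) = c g}}) J"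
    by (rule indep_sets_mono_index[OF Jn])
qed

lemma (in prob_space) windows_AE:
  fixes Ev :: "'i \<times> nat \<Rightarrow> 'a set" and I :: "'i set" and r :: nat and pr :: "'i \<Rightarrow> nat \<Rightarrow> real"
  assumes indep: "indep_sets (\<lambda>x. {Ev x}) (I \<times> UNIV)"
    and fin: "finite I"
    and pev: "\<And>a g. a \<in> I \<Longrightarrow> prob (Ev (a, g)) = pr a (g mod r)"
    and ppos: "\<And>a q. a \<in> I \<Longrightarrow> q < r \<Longrightarrow> 0 < pr a q"
  shows "AE \<omega> in M. \<exists>m. \<forall>a\<in>I. \<forall>q<r. \<omega> \<in> Ev (a, m * r + q)"
proof -
  have ev: "Ev x \<in> events" if "x \<in> I \<times> UNIV" for x using indep that by (auto simp: indep_sets_def)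
  define Blk where "Blk m = I \<times> {m * r..<m * r + r}" for m
  define A where "A m = space M \<inter> (\<Inter>x\<in>Blk m. Ev x)" for m
  define C where "C m = space M - A m" for m
  define p where "p = (\<Prod>a\<in>I. \<Prod>q<r. pr a q)"
  have ppos': "0 < p" unfolding p_def by (intro prod_pos) (auto intro: ppos)
  have finB: "finite (Blk m)" for m using fin by (simp add: Blk_def)
  have BI: "Blk m \<subseteq> I \<times> UNIV" for m by (auto simp: Blk_def)
  have probA: "prob (A m) = p" for m
  proof (cases "Blk m = {}")
    case True
    then have "A m = space M" by (simp add: A_def)
    moreover have "I = {} \<or> r = 0" using True by (auto simp: Blk_def)
    ultimately show ?thesis using prob_space by (auto simp: p_def)
  next
    case False
    have sub: "Ev x \<subseteq> space M" if "x \<in> Blk m" for x using ev[of x] BI[of m] that sets.sets_into_space by auto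
    have "(\<Inter>x\<in>Blk m. Ev x) \<subseteq> space M" using False sub by blast
    then have "A m = (\<Inter>x\<in>Blk m. Ev x)" unfolding A_def by blast
    moreover have "prob (\<Inter>x\<in>Blk m. Ev x) = (\<Prod>x\<in>Blk m. prob (Ev x))"
      by (rule indep_setsD[OF indep BI False finB]) simp
    ultimately have "prob (A m) = (\<Prod>x\<in>Blk m. prob (Ev x))" by simp
    also have "\<dots> = (\<Prod>x\<in>Blk m. pr (fst x) (snd x mod r))"
      by (rule prod.cong[OF refl]) (auto simp: Blk_def pev)
    also have "\<dots> = (\<Prod>a\<in>I. \<Prod>g\<in>{m * r..<m * r + r}. pr a (g mod r))"
      unfolding Blk_def prod.cartesian_product by (simp add: case_prod_beta)
    also have "\<dots> = p" unfolding p_def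
    proof (rule prod.cong[OF refl])
      fix a assume "a \<in> I"
      have "{m * r..<m * r + r} = (\<lambda>q. m * r + q) ` {..<r}"
      proof
        show "{m * r..<m * r + r} \<subseteq> (\<lambda>q. m * r + q) ` {..<r}"
        proof
          fix x assume x: "x \<in> {m * r..<m * r + r}"
          then have "x = m * r + (x - m * r)" "x - m * r \<in> {..<r}" by auto
          then show "x \<in> (\<lambda>q. m * r + q) ` {..<r}" by (rule image_eqI)
        qed
      qed auto
      then have "(\<Prod>g\<in>{m * r..<m * r + r}. pr a (g mod r)) = (\<Prod>q<r. pr a ((m * r + q) mod r))"
        by (simp add: prod.reindex)
      also have "\<dots> = (\<Prod>q<r. pr a q)" by (rule prod.cong[OF refl]) simp
      finally show "(\<Prod>g\<in>{m * r..<m * r + r}. pr a (g mod r)) = (\<Prod>q<r. pr a q)" .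
    qed
    finally show ?thesis .
  qed
  have indC: "indep_sets (\<lambda>m. sigma_sets (space M) (\<Union>x\<in>Blk m. {Ev x})) UNIV"
  proof (rule indep_sets_collect_sigma)
    show "indep_sets (\<lambda>x. {Ev x}) (\<Union>m\<in>UNIV. Blk m)"
      by (rule indep_sets_mono_index[OF _ indep]) (auto simp: Blk_def)
    show "Int_stable {Ev x}" for x by (auto simp: Int_stable_def)
    show "disjoint_family_on Blk UNIV"
      unfolding disjoint_family_on_def Blk_def
    proof (intro ballI impI)
      fix m n :: nat assume "m \<noteq> n"
      then consider "m < n" | "n < m" by linarith
      then show "I \<times> {m * r..<m * r + r} \<inter> I \<times> {n * r..<n * r + r} = {}"
      proof cases
        case 1
        then have "m * r + r \<le> n * r" by (metis add.commute mult_Suc mult_le_mono1 Suc_leI)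
        then show ?thesis by auto
      next
        case 2
        then have "n * r + r \<le> m * r" by (metis add.commute mult_Suc mult_le_mono1 Suc_leI)
        then show ?thesis by auto
      qed
    qed
  qed
  have Csig: "C m \<in> sigma_sets (space M) (\<Union>x\<in>Blk m. {Ev x})" for m
  proof (cases "Blk m = {}")
    case True
    then have "C m = {}" by (simp add: C_def A_def)
    then show ?thesis by (simp add: sigma_sets.Empty)
  next
    case False
    have sub: "(\<Union>x\<in>Blk m. {Ev x}) \<subseteq> Pow (space M)" using ev BI sets.sets_into_space by blast
    interpret S: sigma_algebra "space M" "sigma_sets (space M) (\<Union>x\<in>Blk m. {Ev x})"
      by (rule sigma_algebra_sigma_sets[OF sub])
    have sub: "Ev x \<subseteq> space M" if "x \<in> Blk m" for x using ev[of x] BI[of m] that sets.sets_into_space by auto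
    have "(\<Inter>x\<in>Blk m. Ev x) \<subseteq> space M" using False sub by blast
    then have "A m = (\<Inter>x\<in>Blk m. Ev x)" unfolding A_def by blast
    also have "\<dots> \<in> sigma_sets (space M) (\<Union>x\<in>Blk m. {Ev x})"
      by (rule S.finite_INT[OF finB False]) (auto intro: sigma_sets.Basic)
    finally show ?thesis unfolding C_def by (rule S.compl_sets)
  qed
  have Cev: "C m \<in> events" for m unfolding C_def A_def
    using ev BI finB by (cases "Blk m = {}") (auto intro!: sets.Int sets.Diff sets.finite_INT)
  have probC: "prob (\<Inter>m<Suc n. C m) = (1 - p) ^ Suc n" for n
  proof -
    have "prob (\<Inter>m\<in>{..<Suc n}. C m) = (\<Prod>m\<in>{..<Suc n}. prob (C m))"
      by (rule indep_setsD[OF indC]) (auto intro: Csig)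
    also have "\<dots> = (\<Prod>m\<in>{..<Suc n}. 1 - p)"
    proof (rule prod.cong[OF refl])
      fix m
      have "A m \<in> events" unfolding A_def
        using ev BI finB by (cases "Blk m = {}") (auto intro!: sets.Int sets.finite_INT)
      then show "prob (C m) = 1 - p" unfolding C_def using prob_compl probA by simp
    qed
    finally show ?thesis by simp
  qed
  define Z where "Z = (\<Inter>m. C m)"
  have Zev: "Z \<in> events" unfolding Z_def using Cev by auto
  have p1: "p \<le> 1" using probA[of 0] by (metis prob_le_1)
  have le: "prob Z \<le> (1 - p) ^ Suc n" for n
  proof -
    have "prob Z \<le> prob (\<Inter>m<Suc n. C m)"
      by (rule finite_measure_mono) (auto simp: Z_def Cev)
    then show ?thesis using probC by simp
  qed
  have lim: "(\<lambda>n. (1 - p) ^ Suc n) \<longlonglongrightarrow> 0"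
  proof -
    have "(\<lambda>n. (1 - p) ^ n) \<longlonglongrightarrow> 0" using ppos' p1 by (intro LIMSEQ_power_zero) auto
    then show ?thesis by (rule LIMSEQ_Suc)
  qed
  have "prob Z \<le> 0" by (rule tendsto_lowerbound[OF lim]) (intro always_eventually allI le, simp)
  then have "prob Z = 0" using measure_nonneg[of M Z] by linarith
  then have "Z \<in> null_sets M" using Zev by (simp add: null_sets_def emeasure_eq_measure)
  then have "AE \<omega> in M. \<omega> \<notin> Z" by (rule AE_not_in)
  then show ?thesis
  proof (rule AE_mp[OF _ AE_I2], intro impI)
    fix \<omega> assume \<omega>: "\<omega> \<in> space M" "\<omega> \<notin> Z"
    then obtain m where "\<omega> \<notin> C m" by (auto simp: Z_def)
    then have "\<omega> \<in> A m" using \<omega> by (simp add: C_def)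
    then show "\<exists>m. \<forall>a\<in>I. \<forall>q<r. \<omega> \<in> Ev (a, m * r + q)" by (auto simp: A_def Blk_def intro!: exI[of _ m])
  qed
qed

lemma std_basis_sum: "v \<in> std_basis d \<Longrightarrow> (\<Sum>i<d. v i) = 1"
  by (auto simp: std_basis_def)

lemma pred_incr: "{h :: real \<Rightarrow> nat. h t1 - h t0 = c} \<in> sets (Pi\<^sub>M UNIV (\<lambda>_::real. count_space (UNIV :: nat set)))"
proof -
  have "Measurable.pred (Pi\<^sub>M UNIV (\<lambda>_::real. count_space (UNIV :: nat set))) (\<lambda>h. h t1 - h t0 = c)"
    by measurable
  moreover have "space (Pi\<^sub>M UNIV (\<lambda>_::real. count_space (UNIV :: nat set))) = UNIV"
    by (auto simp: space_PiM PiE_def extensional_def)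
  ultimately show ?thesis by (simp add: pred_def)
qed

theorem lemma2p2:
  fixes M :: "'w measure"
    and d :: nat
    and L :: "nat \<Rightarrow> nat \<Rightarrow> real"
    and a :: "nat \<Rightarrow> 'b :: real_vector"
    and N :: "nat \<Rightarrow> nat \<Rightarrow> 'w \<Rightarrow> real \<Rightarrow> nat"
    and eta0 eta0' :: "'w \<Rightarrow> nat \<Rightarrow> real"
    and eta eta' :: "'w \<Rightarrow> real \<Rightarrow> nat \<Rightarrow> real"
  assumes "prob_space M"
    and "intensity_matrix d L"
    and "ergodic_chain d L"
    and "inj_on a {..<d}"
    and "\<And>i j. i < d \<Longrightarrow> j < d \<Longrightarrow> i \<noteq> j \<Longrightarrow> poisson_process M (L i j) (N i j)"
    and "eta0 \<in> measurable M (Pi\<^sub>M UNIV (\<lambda>_. borel))"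
    and "eta0' \<in> measurable M (Pi\<^sub>M UNIV (\<lambda>_. borel))"
    and "\<And>\<omega>. \<omega> \<in> space M \<Longrightarrow> eta0 \<omega> \<in> std_basis d"
    and "\<And>\<omega>. \<omega> \<in> space M \<Longrightarrow> eta0' \<omega> \<in> std_basis d"
    and "prob_space.indep_sets M
           (\<lambda>x. case x of
                  Inl (i, j) \<Rightarrow> sets (vimage_algebra (space M) (N i j)
                                    (Pi\<^sub>M UNIV (\<lambda>_::real. count_space (UNIV :: nat set))))
                | Inr b \<Rightarrow> sets (vimage_algebra (space M) (if b then eta0 else eta0')
                                    (Pi\<^sub>M UNIV (\<lambda>_::nat. (borel :: real measure)))))
           (Inl ` {(i, j). i < d \<and> j < d \<and> i \<noteq> j} \<union> Inr ` UNIV)"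
    and "AE \<omega> in M. sde_solution d (\<lambda>i j. N i j \<omega>) (eta0 \<omega>) (eta \<omega>)"
    and "AE \<omega> in M. sde_solution d (\<lambda>i j. N i j \<omega>) (eta0' \<omega>) (eta' \<omega>)"
  shows "AE \<omega> in M.
           (let X = (\<lambda>t. \<Sum>i<d. eta \<omega> t i *\<^sub>R a i);
                X' = (\<lambda>t. \<Sum>i<d. eta' \<omega> t i *\<^sub>R a i);
                tau = Inf {ereal t | t. 0 \<le> t \<and> X t = X' t}
            in ((\<lambda>n::nat. if ereal (real n) \<le> tau then 1 else (0::real)) \<longlonglongrightarrow> 0))"
proof -
  interpret prob_space M by (rule assms(1))
  note pois = assms(5)
  define P where "P = {(i, j). i < d \<and> j < d \<and> i \<noteq> j}"
  have finP: "finite P"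
  proof -
    have "P \<subseteq> {..<d} \<times> {..<d}" by (auto simp: P_def)
    then show ?thesis by (rule finite_subset) simp
  qed
  have d: "0 < d"
  proof -
    obtain \<omega> where "\<omega> \<in> space M" using not_empty by blast
    then have "eta0 \<omega> \<in> std_basis d" by (rule assms(8))
    then show ?thesis by (auto simp: std_basis_def)
  qed
  obtain w where w: "set w \<subseteq> {(i,j). i < d \<and> j < d \<and> i \<noteq> j \<and> 0 < L i j}" "\<forall>l<d. wsm w l = 0"
    using ergodic_word[OF assms(3) assms(2) d] by blast
  define r where "r = length w"
  define c where "c i j g = (if (i, j) = w ! (g mod r) then 1 else (0::nat))" for i j g
  define Fam where "Fam = (\<lambda>x. case x of
                  Inl (i, j) \<Rightarrow> sets (vimage_algebra (space M) (N i j)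
                                    (Pi\<^sub>M UNIV (\<lambda>_::real. count_space (UNIV :: nat set))))
                | Inr b \<Rightarrow> sets (vimage_algebra (space M) (if b then eta0 else eta0')
                                    (Pi\<^sub>M UNIV (\<lambda>_::nat. (borel :: real measure)))))"
  define Ev where "Ev x = (case fst x of Inl (i, j) \<Rightarrow>
      {\<omega> \<in> space M. N i j \<omega> (real (Suc (snd x))) - N i j \<omega> (real (snd x)) = c i j (snd x)} | Inr _ \<Rightarrow> {})"
    for x :: "((nat \<times> nat) + bool) \<times> nat"
  define pr where "pr x q = (case x of Inl (i, j) \<Rightarrow>
      (L i j) ^ (if (i, j) = w ! q then 1 else 0) / fact (if (i, j) = w ! q then 1 else 0) * exp (- L i j) | Inr _ \<Rightarrow> 0)"
    for x :: "(nat \<times> nat) + bool" and q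
  have indF: "indep_sets Fam (Inl ` P)"
    using indep_sets_mono_index[OF _ assms(10)] unfolding Fam_def P_def by blast
  have indE: "indep_sets (\<lambda>x. {Ev (fst x, snd x)}) (Sigma (Inl ` P) (\<lambda>_. UNIV))"
  proof (rule indep_sets_combine[OF indF, where G = "\<lambda>a g. {Ev (a, g)}"])
    fix x :: "(nat \<times> nat) + bool" assume "x \<in> Inl ` P"
    then obtain i j where x: "x = Inl (i, j)" and ij: "i < d" "j < d" "i \<noteq> j" by (auto simp: P_def)
    have "indep_sets (\<lambda>g. {{\<omega> \<in> space M. N i j \<omega> (real (Suc g)) - N i j \<omega> (real g) = c i j g}}) UNIV"
      by (rule poisson_indep_events[OF pois[OF ij]])
    then show "indep_sets (\<lambda>g. {Ev (x, g)}) UNIV" by (simp add: Ev_def x)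
  next
    fix x :: "(nat \<times> nat) + bool" and g :: nat assume "x \<in> Inl ` P"
    then obtain i j where x: "x = Inl (i, j)" and ij: "i < d" "j < d" "i \<noteq> j" by (auto simp: P_def)
    have sp: "space (Pi\<^sub>M UNIV (\<lambda>_::real. count_space (UNIV :: nat set))) = UNIV"
      by (auto simp: space_PiM PiE_def extensional_def)
    have evx: "Ev (x, g) = N i j -` {h. h (real (Suc g)) - h (real g) = c i j g} \<inter> space M"
      by (auto simp: Ev_def x)
    have Nsp: "N i j \<in> space M \<rightarrow> space (Pi\<^sub>M UNIV (\<lambda>_::real. count_space (UNIV :: nat set)))"
      by (simp add: sp)
    have "Ev (x, g) \<in> sets (vimage_algebra (space M) (N i j) (Pi\<^sub>M UNIV (\<lambda>_::real. count_space (UNIV :: nat set))))"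
    proof -
      have "N i j -` {h. h (real (Suc g)) - h (real g) = c i j g} \<inter> space M
          \<in> {N i j -` A \<inter> space M | A. A \<in> sets (Pi\<^sub>M UNIV (\<lambda>_::real. count_space (UNIV :: nat set)))}"
        using pred_incr by blast
      then show ?thesis unfolding evx sets_vimage_algebra2[OF Nsp] .
    qed
    then show "{Ev (x, g)} \<subseteq> Fam x" by (simp add: Fam_def x)
  next
    fix x :: "(nat \<times> nat) + bool" and K :: "nat set" and A
    assume "x \<in> Inl ` P" "finite K" "K \<noteq> {}" "\<forall>k\<in>K. A k \<in> Fam x"
    moreover from this obtain i j where x: "x = Inl (i, j)" by auto
    ultimately show "(\<Inter>k\<in>K. A k) \<in> Fam x"
      by (auto simp: Fam_def intro!: sets.finite_INT)
  qed
  have indE': "indep_sets (\<lambda>x. {Ev x}) (Inl ` P \<times> UNIV)" using indE by simp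
  have pev: "prob (Ev (x, g)) = pr x (g mod r)" if "x \<in> Inl ` P" for x g
  proof -
    from that obtain i j where x: "x = Inl (i, j)" and ij: "i < d" "j < d" "i \<noteq> j" by (auto simp: P_def)
    have "prob {\<omega> \<in> space M. N i j \<omega> (real (Suc g)) - N i j \<omega> (real g) = c i j g}
        = (L i j * (real (Suc g) - real g)) ^ c i j g / fact (c i j g) * exp (- (L i j * (real (Suc g) - real g)))"
      using pois[OF ij] unfolding poisson_process_def by simp
    then show ?thesis by (simp add: Ev_def pr_def x c_def)
  qed
  have ppos: "0 < pr x q" if "x \<in> Inl ` P" "q < r" for x q
  proof -
    from that obtain i j where x: "x = Inl (i, j)" by auto
    show ?thesis
    proof (cases "(i, j) = w ! q")
      case True
      then have "(i, j) \<in> set w" using that(2) r_def by (metis nth_mem)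
      then have "0 < L i j" using w(1) by auto
      then show ?thesis by (simp add: pr_def x True[symmetric])
    qed (simp add: pr_def x)
  qed
  have AEwin: "AE \<omega> in M. \<exists>m. \<forall>x\<in>Inl ` P. \<forall>q<r. \<omega> \<in> Ev (x, m * r + q)"
    by (rule windows_AE[OF indE' _ pev ppos]) (use finP in auto)
  have AEpath: "AE \<omega> in M. \<forall>ij\<in>P. pathp (N (fst ij) (snd ij) \<omega>)"
  proof (rule AE_finite_allI[OF finP])
    fix ij assume "ij \<in> P"
    then have ij: "fst ij < d" "snd ij < d" "fst ij \<noteq> snd ij" by (auto simp: P_def)
    have "AE \<omega> in M. N (fst ij) (snd ij) \<omega> 0 = 0 \<and> mono_on {0..} (N (fst ij) (snd ij) \<omega>) \<and>
        (\<forall>t\<ge>0. ((\<lambda>u. real (N (fst ij) (snd ij) \<omega> u)) \<longlongrightarrow> real (N (fst ij) (snd ij) \<omega> t)) (at_right t))"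
      using pois[OF ij] unfolding poisson_process_def by blast
    then show "AE \<omega> in M. pathp (N (fst ij) (snd ij) \<omega>)"
      by eventually_elim (simp add: pathp_def)
  qed
  show ?thesis
    using AEwin AEpath assms(11) assms(12) AE_space
  proof eventually_elim
    case (elim \<omega>)
    then obtain m where win: "\<forall>x\<in>Inl ` P. \<forall>q<r. \<omega> \<in> Ev (x, m * r + q)" by blast
    have paths: "pathp (N i j \<omega>)" if "i < d" "j < d" "i \<noteq> j" for i j
      using elim(2) that by (force simp: P_def)
    have steps: "N i j \<omega> (real (m * r + q) + 1) = N i j \<omega> (real (m * r + q)) + (if (i, j) = w ! q then 1 else 0)"
      if "q < length w" "i < d" "j < d" "i \<noteq> j" for q i j
    proof -
      have inP: "Inl (i, j) \<in> Inl ` P" using that by (auto simp: P_def)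
      have qr: "q < r" using that(1) by (simp add: r_def)
      have "\<forall>q<r. \<omega> \<in> Ev (Inl (i, j), m * r + q)" using win inP by (rule bspec)
      then have "\<omega> \<in> Ev (Inl (i, j), m * r + q)" using qr by simp
      moreover have "Ev (Inl (i, j), m * r + q) = {\<omega> \<in> space M. N i j \<omega> (real (Suc (m * r + q))) - N i j \<omega> (real (m * r + q)) = c i j (m * r + q)}"
        unfolding Ev_def fst_conv snd_conv sum.case prod.case by (rule refl)
      ultimately have f1: "N i j \<omega> (real (Suc (m * r + q))) - N i j \<omega> (real (m * r + q)) = c i j (m * r + q)"
        by blast
      have f2: "c i j (m * r + q) = (if (i, j) = w ! q then 1 else 0)"
        using that(1) by (simp add: c_def r_def)
      have f3: "N i j \<omega> (real (m * r + q)) \<le> N i j \<omega> (real (Suc (m * r + q)))"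
        by (rule pathp_mono[OF paths[OF that(2-4)]]) auto
      have f4: "real (Suc (m * r + q)) = real (m * r + q) + 1" by simp
      have "N i j \<omega> (real (Suc (m * r + q))) = N i j \<omega> (real (m * r + q)) + (if (i, j) = w ! q then 1 else 0)"
        using f1 f2 f3 by linarith
      then show ?thesis unfolding f4 .
    qed
    define T where "T = real (m * r + r)"
    have collapse: "\<forall>k<d. e T k = (if k = 0 then 1 else 0)"
      if sde: "sde_solution d (\<lambda>i j. N i j \<omega>) e0 e" and e0: "e0 \<in> std_basis d" for e0 e
    proof (intro allI impI)
      fix k assume k: "k < d"
      have win': "\<forall>k<d. e (real (m * r + length w)) k = wmv w (e (real (m * r))) k"
      proof (rule sde_window[where nb = "m * r" and F = "\<lambda>i j. N i j \<omega>", OF sde])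
        show "set w \<subseteq> {(i, j). i < d \<and> j < d \<and> i \<noteq> j}" using w(1) by blast
        show "\<And>a b. a < d \<Longrightarrow> b < d \<Longrightarrow> a \<noteq> b \<Longrightarrow> pathp (N a b \<omega>)" by (rule paths)
        show "\<And>q a b. q < length w \<Longrightarrow> a < d \<Longrightarrow> b < d \<Longrightarrow> a \<noteq> b \<Longrightarrow>
          N a b \<omega> (real (m * r + q) + 1) = N a b \<omega> (real (m * r + q)) + (if (a, b) = w ! q then 1 else 0)"
          by (rule steps)
      qed
      have "e T k = wmv w (e (real (m * r))) k" using win' k by (simp add: T_def r_def)
      also have "\<dots> = (if k = 0 then (\<Sum>l<d. e (real (m * r)) l) else 0)"
      proof (rule wmv_collapse[OF _ w(2) k])
        show "set w \<subseteq> {(i, j). i < d \<and> j < d \<and> i \<noteq> j}" using w(1) by blast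
      qed
      also have "(\<Sum>l<d. e (real (m * r)) l) = (\<Sum>l<d. e0 l)" by (rule sde_conservation[OF sde]) simp
      also have "\<dots> = 1" by (rule std_basis_sum[OF e0])
      finally show "e T k = (if k = 0 then 1 else 0)" .
    qed
    have eq: "eta \<omega> T k = eta' \<omega> T k" if "k < d" for k
      using collapse[OF elim(3) assms(8)[OF elim(5)]] collapse[OF elim(4) assms(9)[OF elim(5)]] that by simp
    define X where "X = (\<lambda>t. \<Sum>i<d. eta \<omega> t i *\<^sub>R a i)"
    define X' where "X' = (\<lambda>t. \<Sum>i<d. eta' \<omega> t i *\<^sub>R a i)"
    define tau where "tau = Inf {ereal t | t. 0 \<le> t \<and> X t = X' t}"
    have "X T = X' T" unfolding X_def X'_def by (rule sum.cong) (auto simp: eq)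
    moreover have "0 \<le> T" by (simp add: T_def)
    ultimately have "ereal T \<in> {ereal t | t. 0 \<le> t \<and> X t = X' t}" by blast
    then have tauT: "tau \<le> ereal T" unfolding tau_def by (rule Inf_lower)
    have "eventually (\<lambda>n::nat. (if ereal (real n) \<le> tau then 1 else (0::real)) = 0) sequentially"
    proof (rule eventually_sequentiallyI[of "Suc (m * r + r)"])
      fix n assume "Suc (m * r + r) \<le> n"
      then have "m * r + r < n" by simp
      then have "real (m * r + r) < real n" by (simp only: of_nat_less_iff)
      then have "T < real n" by (simp only: T_def)
      then have "\<not> ereal (real n) \<le> tau" using tauT by (metis ereal_less_eq(3) leD order_trans)
      then show "(if ereal (real n) \<le> tau then 1 else (0::real)) = 0" by simp
    qed
    then have "(\<lambda>n::nat. if ereal (real n) \<le> tau then 1 else (0::real)) \<longlonglongrightarrow> 0"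
      by (rule tendsto_eventually)
    then show ?case unfolding Let_def X_def[symmetric] X'_def[symmetric] tau_def[symmetric] .
  qed
qed

end
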